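(* Let $\mathfrak{R}$ be either the finite field $\mathbb{F}_q$ ($q$ a prime power) or the ring $\mathbb{Z}_k$ ($k\ge 2$), and let $\chi$ be the character of $\mathfrak{R}$ described in the context. Let $C$ and $D$ be two $\mathfrak{R}$-linear codes of length $n$ and let $\bm{w}\in\mathfrak{R}^n$. Then \[ \mathfrak{Jac}(C,D^{\perp},\bm{w}; x_{a} : a \in \mathfrak{R}^{3}) =\frac{1}{|D|}\,\mathfrak{Jac}\Big(C,D,\bm{w};\ \sum_{b\in\mathfrak{R}}\chi(a_2 b)\,x_{(a_1,b,a_3)} : a=(a_1,a_2,a_3)\in\mathfrak{R}^{3}\Big), \] where the right-hand side means the polynomial $\mathfrak{Jac}(C,D,\bm{w};x_a : a\in\mathfrak{R}^3)$ with each variable $x_{(a_1,a_2,a_3)}$ replaced by $\sum_{b\in\mathfrak{R}}\chi(a_2 b)\,x_{(a_1,b,a_3)}$.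
   Context: An $\mathbb{F}_q$-linear code of length $n$ is a subspace of $\mathbb{F}_q^n$; a $\mathbb{Z}_k$-linear code of length $n$ is an additive subgroup of $\mathbb{Z}_k^n$. For $\bm{u},\bm{v}\in\mathfrak{R}^n$, $\bm{u}\cdot\bm{v}=\sum_i u_iv_i$, and the dual code is $C^\perp=\{\bm{v}\in\mathfrak{R}^n : \bm{u}\cdot\bm{v}=0 \text{ for all }\bm{u}\in C\}$. The character $\chi:\mathfrak{R}\to\mathbb{C}^\times$ is defined as follows. If $\mathfrak{R}=\mathbb{F}_q$ with $q=p^f$, $p$ prime, fix a root $\lambda$ of a primitive irreducible polynomial of degree $f$ over $\mathbb{F}_p$, write each $\alpha\in\mathbb{F}_q$ uniquely as $\alpha=\alpha_0+\alpha_1\lambda+\cdots+\alpha_{f-1}\lambda^{f-1}$ with $\alpha_i\in\mathbb{F}_p$, and set $\chi(\alpha)=\zeta_p^{\alpha_0}$ where $\zeta_p$ is a primitive $p$-th root of unity. If $\mathfrak{R}=\mathbb{Z}_k$, set $\chi(\alpha)=\zeta_k^{\alpha}$ with $\zeta_k$ a primitive $k$-th root of unity. For $\bm{u},\bm{v},\bm{w}\in\mathfrak{R}^n$ and $a\in\mathfrak{R}^3$, let $h_a(\bm{u},\bm{v};\bm{w})=\#\{i : (u_i,v_i,w_i)=a\}$. The complete joint Jacobi polynomial of $\mathfrak{R}$-linear codes $C,D$ of length $n$ with respect to $\bm{w}$ is the polynomial in the $|\mathfrak{R}|^3$ variables $x_a$ ($a\in\mathfrak{R}^3$) \[\mathfrak{Jac}(C,D,\bm{w};x_a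 : a\in\mathfrak{R}^3)=\sum_{\bm{u}\in C,\ \bm{v}\in D}\ \prod_{a\in\mathfrak{R}^3}x_a^{h_a(\bm{u},\bm{v};\bm{w})}.\] *)

theory Defs
  imports Complex_Main "HOL-Computational_Algebra.Primes"
begin

text \<open>The ring is an abstract finite commutative ring type 'r; the predicates below say
that 'r is (up to isomorphism) F_q resp. Z_k and that chi is the character described in
the paper.\<close>

definition primitive_element :: "'r::{comm_ring_1,finite} \<Rightarrow> bool" where
  "primitive_element lam \<longleftrightarrow> lam \<noteq> 0 \<and> (\<forall>x::'r. x \<noteq> 0 \<longrightarrow> (\<exists>i::nat. x = lam ^ i))"

text \<open>F_q with q = p^f: a field with p^f elements, of characteristic p; lam is a root of a
primitive irreducible polynomial of degree f over F_p, i.e. a generator of the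
multiplicative group; every alpha is uniquely sum_{i<f} alpha_i lam^i with alpha_i in F_p
(elements of_nat j, j < p), and chi(alpha) = zeta_p^(alpha_0).\<close>

definition Fq_character :: "('r::{comm_ring_1,finite} \<Rightarrow> complex) \<Rightarrow> bool" where
  "Fq_character chi \<longleftrightarrow>
     (\<exists>(p::nat) (f::nat) (lam::'r) (zeta::complex).
        prime p \<and> f \<ge> 1 \<and> card (UNIV::'r set) = p ^ f \<and>
        (\<forall>x::'r. x \<noteq> 0 \<longrightarrow> (\<exists>y. x * y = 1)) \<and>
        of_nat p = (0::'r) \<and>
        primitive_element lam \<and>
        zeta ^ p = 1 \<and> (\<forall>j. 0 < j \<and> j < p \<longrightarrow> zeta ^ j \<noteq> 1) \<and>
        (\<forall>a::nat \<Rightarrow> nat. (\<forall>i<f. a i < p) \<longrightarrow>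
            chi (\<Sum>i<f. of_nat (a i) * lam ^ i) = zeta ^ (a 0)))"

text \<open>Z_k, k >= 2: phi is a ring isomorphism onto {0..<k} with arithmetic mod k, and
chi(alpha) = zeta_k^alpha.\<close>

definition Zk_character :: "('r::{comm_ring_1,finite} \<Rightarrow> complex) \<Rightarrow> bool" where
  "Zk_character chi \<longleftrightarrow>
     (\<exists>(k::nat) (phi::'r \<Rightarrow> nat) (zeta::complex).
        k \<ge> 2 \<and> bij_betw phi UNIV {0..<k} \<and>
        (\<forall>x y. phi (x + y) = (phi x + phi y) mod k) \<and>
        (\<forall>x y. phi (x * y) = (phi x * phi y) mod k) \<and>
        zeta ^ k = 1 \<and> (\<forall>j. 0 < j \<and> j < k \<longrightarrow> zeta ^ j \<noteq> 1) \<and>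
        (\<forall>x. chi x = zeta ^ phi x))"

definition vecs :: "nat \<Rightarrow> 'r list set" where
  "vecs n = {v. length v = n}"

definition vadd :: "'r::plus list \<Rightarrow> 'r list \<Rightarrow> 'r list" where
  "vadd u v = map2 (+) u v"

definition linear_subspace :: "nat \<Rightarrow> 'r::comm_ring_1 list set \<Rightarrow> bool" where
  "linear_subspace n C \<longleftrightarrow> C \<subseteq> vecs n \<and> replicate n 0 \<in> C \<and>
     (\<forall>u\<in>C. \<forall>v\<in>C. vadd u v \<in> C) \<and> (\<forall>c. \<forall>u\<in>C. map ((*) c) u \<in> C)"

definition additive_subgroup :: "nat \<Rightarrow> 'r::comm_ring_1 list set \<Rightarrow> bool" where
  "additive_subgroup n C \<longleftrightarrow> C \<subseteq> vecs n \<and> replicate n 0 \<in> C \<and>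
     (\<forall>u\<in>C. \<forall>v\<in>C. vadd u v \<in> C) \<and> (\<forall>u\<in>C. map uminus u \<in> C)"

definition dotp :: "nat \<Rightarrow> 'r::comm_ring_1 list \<Rightarrow> 'r list \<Rightarrow> 'r" where
  "dotp n u v = (\<Sum>i<n. u ! i * v ! i)"

definition dual_code :: "nat \<Rightarrow> 'r::comm_ring_1 list set \<Rightarrow> 'r list set" where
  "dual_code n C = {v \<in> vecs n. \<forall>u\<in>C. dotp n u v = 0}"

section \<open>Complete joint Jacobi polynomial (evaluated at a point x of C^(R^3))\<close>

definition hcount :: "nat \<Rightarrow> 'r list \<Rightarrow> 'r list \<Rightarrow> 'r list \<Rightarrow> 'r \<times> 'r \<times> 'r \<Rightarrow> nat" where
  "hcount n u v w a = card {i. i < n \<and> (u ! i, v ! i, w ! i) = a}"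

definition jac :: "nat \<Rightarrow> 'r::finite list set \<Rightarrow> 'r list set \<Rightarrow> 'r list
                   \<Rightarrow> ('r \<times> 'r \<times> 'r \<Rightarrow> complex) \<Rightarrow> complex" where
  "jac n C D w x = (\<Sum>u\<in>C. \<Sum>v\<in>D. \<Prod>a\<in>UNIV. x a ^ hcount n u v w a)"

end

theory Submission
  imports Defs
begin

lemma hprod:
  fixes y :: "'r::finite \<times> 'r \<times> 'r \<Rightarrow> complex"
  shows "(\<Prod>a\<in>UNIV. y a ^ hcount n u v w a) = (\<Prod>i<n. y (u!i, v!i, w!i))"
proof -
  have "(\<Prod>i<n. y (u!i, v!i, w!i)) =
        (\<Prod>a\<in>UNIV. \<Prod>i\<in>{i. i \<in> {..<n} \<and> (u!i, v!i, w!i) = a}. y (u!i, v!i, w!i))"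
    by (rule prod.group[symmetric]) auto
  also have "\<dots> = (\<Prod>a\<in>UNIV. y a ^ hcount n u v w a)"
    by (rule prod.cong) (auto simp: hcount_def)
  finally show ?thesis by simp
qed

lemma finite_vecs: "finite (vecs n :: 'r::finite list set)"
proof -
  have "vecs n = {xs :: 'r list. set xs \<subseteq> UNIV \<and> length xs = n}" by (auto simp: vecs_def)
  then show ?thesis using finite_lists_length_eq[of "UNIV :: 'r set" n] by simp
qed

lemma prod_sum_lists:
  fixes F :: "nat \<Rightarrow> 'r::finite \<Rightarrow> complex"
  shows "(\<Prod>i<n. \<Sum>b\<in>UNIV. F i b) = (\<Sum>t\<in>vecs n. \<Prod>i<n. F i (t!i))"
proof (induction n arbitrary: F)
  case 0
  have V0: "vecs 0 = {[]}" by (auto simp: vecs_def)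
  show ?case unfolding V0 by simp
next
  case (Suc n)
  have V: "vecs (Suc n) = (\<lambda>(b,xs). b # xs) ` (UNIV \<times> vecs n)"
    by (auto simp: vecs_def image_iff length_Suc_conv)
  have inj: "inj_on (\<lambda>(b,xs). b # xs) (UNIV \<times> vecs n)" by (auto simp: inj_on_def)
  have "(\<Prod>i<Suc n. \<Sum>b\<in>UNIV. F i b) = (\<Sum>b\<in>UNIV. F 0 b) * (\<Prod>i<n. \<Sum>b\<in>UNIV. F (Suc i) b)"
    by (rule prod.lessThan_Suc_shift)
  also have "\<dots> = (\<Sum>b\<in>UNIV. F 0 b) * (\<Sum>t\<in>vecs n. \<Prod>i<n. F (Suc i) (t!i))"
    using Suc.IH[of "\<lambda>i. F (Suc i)"] by simp
  also have "\<dots> = (\<Sum>b\<in>UNIV. \<Sum>t\<in>vecs n. F 0 b * (\<Prod>i<n. F (Suc i) (t!i)))"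
    by (simp add: sum_distrib_left sum_distrib_right sum.swap[of _ UNIV])
  also have "\<dots> = (\<Sum>(b,t)\<in>UNIV \<times> vecs n. F 0 b * (\<Prod>i<n. F (Suc i) (t!i)))"
    by (simp add: sum.cartesian_product)
  also have "\<dots> = (\<Sum>(b,t)\<in>UNIV \<times> vecs n. \<Prod>i<Suc n. F i ((b#t)!i))"
    by (simp only: prod.lessThan_Suc_shift nth_Cons_0 nth_Cons_Suc)
  also have "\<dots> = (\<Sum>t\<in>vecs (Suc n). \<Prod>i<Suc n. F i (t!i))"
    unfolding V by (subst sum.reindex[OF inj]) (simp add: case_prod_beta)
  finally show ?case .
qed

lemma chi_sum:
  fixes chi :: "'r::comm_ring_1 \<Rightarrow> complex"
  assumes chi0: "chi 0 = 1" and chiadd: "\<And>a b. chi (a+b) = chi a * chi b"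
    and "finite I"
  shows "chi (sum g I) = (\<Prod>i\<in>I. chi (g i))"
  using assms(3) by (induction I rule: finite_induct) (auto simp: chi0 chiadd)

lemma dotp_vadd:
  fixes v v0 t :: "'r::comm_ring_1 list"
  assumes "length v = n" "length v0 = n"
  shows "dotp n (vadd v v0) t = dotp n v t + dotp n v0 t"
  unfolding dotp_def vadd_def using assms
  by (simp add: sum.distrib[symmetric] algebra_simps)

lemma char_sum:
  fixes chi :: "'r::{comm_ring_1,finite} \<Rightarrow> complex"
  assumes chi0: "chi 0 = 1" and chiadd: "\<And>a b. chi (a+b) = chi a * chi b"
  and Dsub: "D \<subseteq> vecs n" and Dadd: "\<forall>u\<in>D. \<forall>v\<in>D. vadd u v \<in> D"
  and Dneg: "\<forall>u\<in>D. map uminus u \<in> D"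
  and nontriv: "\<And>t. t \<in> vecs n \<Longrightarrow> t \<notin> dual_code n D \<Longrightarrow> \<exists>v0\<in>D. chi (dotp n v0 t) \<noteq> 1"
  and t: "t \<in> vecs n"
  shows "(\<Sum>v\<in>D. chi (dotp n v t)) = (if t \<in> dual_code n D then of_nat (card D) else 0)"
proof (cases "t \<in> dual_code n D")
  case True
  then have "\<forall>v\<in>D. dotp n v t = 0" by (auto simp: dual_code_def)
  then show ?thesis using True by (simp add: chi0)
next
  case False
  obtain v0 where v0: "v0 \<in> D" "chi (dotp n v0 t) \<noteq> 1" using nontriv[OF t False] by blast
  have lv0: "length v0 = n" using v0 Dsub by (auto simp: vecs_def)
  have "(\<Sum>v\<in>D. chi (dotp n v t)) = (\<Sum>v\<in>D. chi (dotp n (vadd v v0) t))"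
  proof (rule sum.reindex_bij_witness[of _ "\<lambda>v. vadd v v0" "\<lambda>v. vadd v (map uminus v0)"])
    fix v assume v: "v \<in> D"
    have lv: "length v = n" using v Dsub by (auto simp: vecs_def)
    show "vadd (vadd v v0) (map uminus v0) = v"
      using lv lv0 by (auto simp: vadd_def intro!: nth_equalityI)
    show "vadd v v0 \<in> D" using v v0 Dadd by auto
    show e: "vadd (vadd v (map uminus v0)) v0 = v"
      using lv lv0 by (auto simp: vadd_def intro!: nth_equalityI)
    show "vadd v (map uminus v0) \<in> D" using v v0 Dadd Dneg by auto
    show "chi (dotp n (vadd (vadd v (map uminus v0)) v0) t) = chi (dotp n v t)" by (simp only: e)
  qed
  also have "\<dots> = chi (dotp n v0 t) * (\<Sum>v\<in>D. chi (dotp n v t))"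
    unfolding sum_distrib_left
    by (rule sum.cong) (use Dsub lv0 in \<open>auto simp: dotp_vadd chiadd vecs_def\<close>)
  finally have "(1 - chi (dotp n v0 t)) * (\<Sum>v\<in>D. chi (dotp n v t)) = 0"
    by (simp add: algebra_simps)
  then show ?thesis using v0 False by simp
qed

lemma main_abstract:
  fixes chi :: "'r::{comm_ring_1,finite} \<Rightarrow> complex"
    and C D :: "'r list set" and w :: "'r list" and n :: nat
    and x :: "'r \<times> 'r \<times> 'r \<Rightarrow> complex"
  assumes chi0: "chi 0 = 1" and chiadd: "\<And>a b. chi (a+b) = chi a * chi b"
  and Dsub: "D \<subseteq> vecs n" and D0: "replicate n 0 \<in> D"
  and Dadd: "\<forall>u\<in>D. \<forall>v\<in>D. vadd u v \<in> D"
  and Dneg: "\<forall>u\<in>D. map uminus u \<in> D"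
  and nontriv: "\<And>t. t \<in> vecs n \<Longrightarrow> t \<notin> dual_code n D \<Longrightarrow> \<exists>v0\<in>D. chi (dotp n v0 t) \<noteq> 1"
  shows "jac n C (dual_code n D) w x =
         (1 / of_nat (card D)) *
           jac n C D w (\<lambda>(a1, a2, a3). \<Sum>b\<in>UNIV. chi (a2 * b) * x (a1, b, a3))"
proof -
  have finD: "finite D" using Dsub finite_vecs finite_subset by blast
  have cardD: "card D \<noteq> 0" using finD D0 by auto
  have dsub: "dual_code n D \<subseteq> vecs n" by (auto simp: dual_code_def)
  have key: "(\<Sum>v\<in>D. \<Prod>a\<in>UNIV. (\<lambda>(a1, a2, a3). \<Sum>b\<in>UNIV. chi (a2 * b) * x (a1, b, a3)) a ^ hcount n u v w a)
     = of_nat (card D) * (\<Sum>t\<in>dual_code n D. \<Prod>a\<in>UNIV. x a ^ hcount n u t w a)" for u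
  proof -
    define X where "X t = (\<Prod>i<n. x (u!i, t!i, w!i))" for t
    have "(\<Sum>v\<in>D. \<Prod>a\<in>UNIV. (\<lambda>(a1, a2, a3). \<Sum>b\<in>UNIV. chi (a2 * b) * x (a1, b, a3)) a ^ hcount n u v w a)
       = (\<Sum>v\<in>D. \<Prod>i<n. \<Sum>b\<in>UNIV. chi (v!i * b) * x (u!i, b, w!i))"
      by (simp add: hprod)
    also have "\<dots> = (\<Sum>v\<in>D. \<Sum>t\<in>vecs n. \<Prod>i<n. chi (v!i * t!i) * x (u!i, t!i, w!i))"
      by (simp only: prod_sum_lists)
    also have "\<dots> = (\<Sum>v\<in>D. \<Sum>t\<in>vecs n. chi (dotp n v t) * X t)"
      by (simp add: prod.distrib X_def dotp_def chi_sum[OF chi0 chiadd])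
    also have "\<dots> = (\<Sum>t\<in>vecs n. X t * (\<Sum>v\<in>D. chi (dotp n v t)))"
      by (subst sum.swap) (simp add: sum_distrib_left mult.commute)
    also have "\<dots> = (\<Sum>t\<in>vecs n. X t * (if t \<in> dual_code n D then of_nat (card D) else 0))"
      by (rule sum.cong[OF refl]) (simp add: char_sum[OF chi0 chiadd Dsub Dadd Dneg nontriv])
    also have "\<dots> = of_nat (card D) * (\<Sum>t\<in>vecs n. if t \<in> dual_code n D then X t else 0)"
      by (simp add: sum_distrib_left if_distrib mult.commute cong: if_cong)
    also have "\<dots> = of_nat (card D) * (\<Sum>t\<in>dual_code n D. X t)"
      using dsub by (simp add: sum.inter_restrict[OF finite_vecs, symmetric] Int_absorb1)
    also have "\<dots> = of_nat (card D) * (\<Sum>t\<in>dual_code n D. \<Prod>a\<in>UNIV. x a ^ hcount n u t w a)"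
      by (simp add: hprod X_def)
    finally show ?thesis .
  qed
  show ?thesis unfolding jac_def
    by (simp add: key sum_distrib_left cardD)
qed

lemma pow_mod_root:
  fixes zeta :: complex
  assumes "zeta ^ k = 1"
  shows "zeta ^ (m mod k) = zeta ^ m"
proof -
  have "zeta ^ m = zeta ^ (k * (m div k) + m mod k)" by simp
  also have "\<dots> = (zeta ^ k) ^ (m div k) * zeta ^ (m mod k)" by (simp only: power_add power_mult)
  finally show ?thesis using assms by simp
qed

lemma Zk_props:
  fixes chi :: "'r::{comm_ring_1,finite} \<Rightarrow> complex"
  assumes "Zk_character chi"
  shows "chi 0 = 1" "\<And>a b. chi (a+b) = chi a * chi b" "\<And>c. c \<noteq> 0 \<Longrightarrow> chi c \<noteq> 1"
proof -
  obtain k phi zeta where k: "k \<ge> 2" and bij: "bij_betw phi UNIV {0..<k}"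
    and padd: "\<forall>x y. phi (x + y) = (phi x + phi y) mod k"
    and z: "zeta ^ k = 1" and zp: "\<forall>j. 0 < j \<and> j < k \<longrightarrow> zeta ^ j \<noteq> 1"
    and c: "\<forall>x. chi x = zeta ^ phi x"
    using assms unfolding Zk_character_def by blast
  have lt: "phi y < k" for y using bij by (auto simp: bij_betw_def)
  have "phi 0 = (phi 0 + phi 0) mod k" using padd[rule_format, of 0 0] by simp
  then have p0: "phi 0 = 0"
  proof (cases "phi 0 + phi 0 < k")
    case True
    then show ?thesis using \<open>phi 0 = (phi 0 + phi 0) mod k\<close> by simp
  next
    case False
    then have "(phi 0 + phi 0) mod k = phi 0 + phi 0 - k"
      using lt[of 0] by (simp add: le_mod_geq)
    then show ?thesis using \<open>phi 0 = (phi 0 + phi 0) mod k\<close> lt[of 0] by linarith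
  qed
  show "chi 0 = 1" using c p0 by simp
  show "chi (a+b) = chi a * chi b" for a b
    using c padd pow_mod_root[OF z, of "phi a + phi b"] by (simp add: power_add)
  show "chi c \<noteq> 1" if "c \<noteq> 0" for c
  proof -
    have "phi c \<noteq> phi 0" using bij that by (auto simp: bij_betw_def inj_on_def)
    then show ?thesis using p0 c zp lt[of c] by auto
  qed
qed

definition Vs :: "'r::comm_ring_1 \<Rightarrow> nat \<Rightarrow> 'r set" where
  "Vs lam m = {y. \<exists>c. (\<forall>i. c i \<in> \<int>) \<and> y = (\<Sum>i<m. c i * lam ^ i)}"

lemma Vs_intro: "(\<forall>i. c i \<in> \<int>) \<Longrightarrow> y = (\<Sum>i<m. c i * lam ^ i) \<Longrightarrow> y \<in> Vs lam m"
  unfolding Vs_def by blast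

lemma Vs_add: "a \<in> Vs lam m \<Longrightarrow> b \<in> Vs lam m \<Longrightarrow> a + b \<in> Vs lam m"
proof -
  assume "a \<in> Vs lam m" "b \<in> Vs lam m"
  then obtain c d where c: "\<forall>i. c i \<in> \<int>" "a = (\<Sum>i<m. c i * lam ^ i)"
    and d: "\<forall>i. d i \<in> \<int>" "b = (\<Sum>i<m. d i * lam ^ i)" by (auto simp: Vs_def)
  have "a + b = (\<Sum>i<m. (c i + d i) * lam ^ i)" using c d by (simp add: sum.distrib algebra_simps)
  moreover have "\<forall>i. c i + d i \<in> \<int>" using c d by auto
  ultimately show ?thesis by (rule Vs_intro[rotated])
qed

lemma Vs_scale: "r \<in> \<int> \<Longrightarrow> a \<in> Vs lam m \<Longrightarrow> r * a \<in> Vs lam m"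
proof -
  assume r: "r \<in> \<int>" and "a \<in> Vs lam m"
  then obtain c where c: "\<forall>i. c i \<in> \<int>" "a = (\<Sum>i<m. c i * lam ^ i)" by (auto simp: Vs_def)
  have "r * a = (\<Sum>i<m. (r * c i) * lam ^ i)" using c by (simp add: sum_distrib_left algebra_simps)
  moreover have "\<forall>i. r * c i \<in> \<int>" using c r by auto
  ultimately show ?thesis by (rule Vs_intro[rotated])
qed

lemma Vs_diff: "a \<in> Vs lam m \<Longrightarrow> b \<in> Vs lam m \<Longrightarrow> a - b \<in> Vs lam m"
  using Vs_add[of a lam m "(-1) * b"] Vs_scale[of "-1" b lam m] by simp

lemma Vs_zero: "0 \<in> Vs lam m"
  unfolding Vs_def by (rule CollectI, rule exI[of _ "\<lambda>_. 0"]) simp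

lemma Vs_one: "m \<ge> 1 \<Longrightarrow> 1 \<in> Vs lam m"
proof -
  assume m: "m \<ge> 1"
  have "(\<Sum>i<m. (if i = 0 then 1 else 0) * lam ^ i) = (\<Sum>i<m. if i = 0 then 1 else 0)"
    by (rule sum.cong) auto
  also have "\<dots> = 1" using m by (simp add: sum.delta)
  finally show ?thesis unfolding Vs_def
    by (intro CollectI exI[of _ "\<lambda>i. if i = 0 then 1 else 0"]) auto
qed

lemma Vs_Suc: "Vs lam (Suc m) = {v + r * lam ^ m | v r. v \<in> Vs lam m \<and> r \<in> \<int>}"
proof (intro set_eqI iffI)
  fix y assume "y \<in> Vs lam (Suc m)"
  then obtain c where c: "\<forall>i. c i \<in> \<int>" "y = (\<Sum>i<Suc m. c i * lam ^ i)" by (auto simp: Vs_def)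
  have "(\<Sum>i<m. c i * lam ^ i) \<in> Vs lam m" using c by (intro Vs_intro) auto
  moreover have "y = (\<Sum>i<m. c i * lam ^ i) + c m * lam ^ m" using c by simp
  ultimately show "y \<in> {v + r * lam ^ m | v r. v \<in> Vs lam m \<and> r \<in> \<int>}" using c by blast
next
  fix y assume "y \<in> {v + r * lam ^ m | v r. v \<in> Vs lam m \<and> r \<in> \<int>}"
  then obtain v r c where r: "r \<in> \<int>" and y: "y = v + r * lam ^ m"
    and c: "\<forall>i. c i \<in> \<int>" "v = (\<Sum>i<m. c i * lam ^ i)" by (auto simp: Vs_def)
  have "(\<Sum>i<m. (c(m := r)) i * lam ^ i) = v" using c by (auto intro!: sum.cong)
  then have "y = (\<Sum>i<Suc m. (c(m := r)) i * lam ^ i)" using y by simp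
  moreover have "\<forall>i. (c(m := r)) i \<in> \<int>" using c r by auto
  ultimately show "y \<in> Vs lam (Suc m)" by (rule Vs_intro[rotated])
qed

lemma Vs_lam: "a \<in> Vs lam m \<Longrightarrow> lam * a \<in> Vs lam (Suc m)"
proof -
  assume "a \<in> Vs lam m"
  then obtain c where c: "\<forall>i. c i \<in> \<int>" "a = (\<Sum>i<m. c i * lam ^ i)" by (auto simp: Vs_def)
  define c' where "c' i = (case i of 0 \<Rightarrow> 0 | Suc j \<Rightarrow> c j)" for i
  have "(\<Sum>i<Suc m. c' i * lam ^ i) = (\<Sum>i<m. c i * lam ^ Suc i)"
    by (simp only: sum.lessThan_Suc_shift) (simp add: c'_def)
  also have "\<dots> = lam * a" using c by (simp add: sum_distrib_left algebra_simps)
  finally have "lam * a = (\<Sum>i<Suc m. c' i * lam ^ i)" by simp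
  moreover have "\<forall>i. c' i \<in> \<int>" using c by (auto simp: c'_def split: nat.split)
  ultimately show ?thesis by (rule Vs_intro[rotated])
qed

lemma Ints_to_nat:
  assumes p0: "of_nat p = (0::'r::comm_ring_1)" and pp: "p > 0" and r: "r \<in> \<int>"
  shows "\<exists>j<p. r = (of_nat j :: 'r)"
proof -
  obtain z where z: "r = of_int z" using r by (auto elim: Ints_cases)
  have "z = int p * (z div int p) + z mod int p" by simp
  then have "(of_int z :: 'r) = of_int (int p) * of_int (z div int p) + of_int (z mod int p)"
    by (metis of_int_add of_int_mult)
  also have "\<dots> = of_int (z mod int p)" using p0 by simp
  finally have e: "r = of_int (z mod int p)" using z by simp
  have "z mod int p \<ge> 0" "z mod int p < int p" using pp by auto
  then have "nat (z mod int p) < p" "of_int (z mod int p) = (of_nat (nat (z mod int p)) :: 'r)"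
    by auto
  then show ?thesis using e by blast
qed

lemma Vs_closed:
  fixes lam :: "'r::{comm_ring_1,finite}"
  assumes prim: "primitive_element lam" and L: "lam ^ m \<in> Vs lam m"
  shows "Vs lam m = UNIV"
proof -
  have one: "1 \<in> Vs lam m"
  proof (cases "m = 0")
    case True then show ?thesis using L by simp
  next
    case False then show ?thesis by (intro Vs_one) simp
  qed
  have lamc: "lam * a \<in> Vs lam m" if a: "a \<in> Vs lam m" for a
  proof -
    have "lam * a \<in> Vs lam (Suc m)" using Vs_lam[OF a] .
    then obtain v r where "lam * a = v + r * lam ^ m" "v \<in> Vs lam m" "r \<in> \<int>"
      unfolding Vs_Suc by blast
    then show ?thesis using Vs_add Vs_scale L by metis
  qed
  have pw: "lam ^ j \<in> Vs lam m" for j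
    by (induction j) (use one lamc in auto)
  show ?thesis
  proof (intro set_eqI iffI)
    fix x :: 'r
    show "x \<in> Vs lam m"
    proof (cases "x = 0")
      case True then show ?thesis using Vs_zero by simp
    next
      case False
      then obtain i where "x = lam ^ i" using prim by (auto simp: primitive_element_def)
      then show ?thesis using pw by simp
    qed
  qed simp
qed

lemma Vs_card_Suc:
  fixes lam :: "'r::{comm_ring_1,finite}"
  assumes pr: "prime p" and p0: "of_nat p = (0::'r)" and L: "lam ^ m \<notin> Vs lam m"
  shows "card (Vs lam (Suc m)) = p * card (Vs lam m)"
proof -
  have pp: "p > 0" using pr prime_gt_0_nat by blast
  let ?g = "\<lambda>(v, j). v + of_nat j * lam ^ m"
  have img: "Vs lam (Suc m) = ?g ` (Vs lam m \<times> {..<p})"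
  proof (intro set_eqI iffI)
    fix y assume "y \<in> Vs lam (Suc m)"
    then obtain v r where y: "y = v + r * lam ^ m" "v \<in> Vs lam m" "r \<in> \<int>"
      unfolding Vs_Suc by blast
    obtain j where "j < p" "r = of_nat j" using Ints_to_nat[OF p0 pp y(3)] by blast
    then show "y \<in> ?g ` (Vs lam m \<times> {..<p})" using y by (auto intro!: image_eqI[of _ _ "(v, j)"])
  next
    fix y assume "y \<in> ?g ` (Vs lam m \<times> {..<p})"
    then obtain v j where "y = v + of_nat j * lam ^ m" "v \<in> Vs lam m" by auto
    then show "y \<in> Vs lam (Suc m)" unfolding Vs_Suc by (auto intro: Ints_of_nat)
  qed
  have inj: "inj_on ?g (Vs lam m \<times> {..<p})"
  proof (rule inj_onI, clarify)
    fix v j v' j' assume v: "v \<in> Vs lam m" "j < p" "v' \<in> Vs lam m" "j' < p"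
      and e: "v + of_nat j * lam ^ m = v' + of_nat j' * lam ^ m"
    show "v = v' \<and> j = j'"
    proof (cases "j = j'")
      case True then show ?thesis using e by simp
    next
      case False
      define d where "d = int j - int j'"
      have d0: "d \<noteq> 0" using False by (simp add: d_def)
      have "\<not> int p dvd d"
      proof
        assume "int p dvd d"
        then have "\<bar>int p\<bar> \<le> \<bar>d\<bar>" using dvd_imp_le_int[OF d0] by blast
        then show False using v by (simp add: d_def)
      qed
      then have "coprime (int p) d" using pr by (intro prime_imp_coprime) auto
      then obtain e1 e2 where b: "e1 * d + e2 * int p = 1"
        using bezout_int[of d "int p"] by (auto simp: coprime_iff_gcd_eq_1 gcd.commute)
      have "(of_int (e1 * d + e2 * int p) :: 'r) = 1" using b by simp
      then have ed: "of_int e1 * of_int d = (1 :: 'r)" using p0 by simp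
      have "of_int d * lam ^ m = v' - v" using e by (simp add: d_def algebra_simps)
      then have "lam ^ m = of_int e1 * (v' - v)"
        by (metis ed mult.assoc mult_1)
      moreover have "of_int e1 * (v' - v) \<in> Vs lam m" using v by (intro Vs_scale Vs_diff) auto
      ultimately show ?thesis using L by simp
    qed
  qed
  have "card (Vs lam (Suc m)) = card (Vs lam m \<times> {..<p})"
    unfolding img by (rule card_image[OF inj])
  then show ?thesis by (simp add: card_cartesian_product)
qed

lemma Vs_full:
  fixes lam :: "'r::{comm_ring_1,finite}"
  assumes pr: "prime p" and p0: "of_nat p = (0::'r)" and prim: "primitive_element lam"
    and card: "card (UNIV :: 'r set) = p ^ f"
  shows "Vs lam f = UNIV"
proof -
  have "Vs lam m = UNIV \<or> card (Vs lam m) = p ^ m" for m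
  proof (induction m)
    case 0
    have "Vs lam 0 = {0}" by (auto simp: Vs_def intro: exI[of _ "\<lambda>_. 0"])
    then show ?case by simp
  next
    case (Suc m)
    show ?case
    proof (cases "lam ^ m \<in> Vs lam m")
      case True
      then have "Vs lam m = UNIV" using Vs_closed[OF prim] by blast
      moreover have "Vs lam m \<subseteq> Vs lam (Suc m)"
        unfolding Vs_Suc by (force intro: exI[of _ 0])
      ultimately show ?thesis by auto
    next
      case False
      have "Vs lam m \<noteq> UNIV" using False by auto
      then have "card (Vs lam m) = p ^ m" using Suc by auto
      then show ?thesis using Vs_card_Suc[OF pr p0 False] by simp
    qed
  qed
  then have "Vs lam f = UNIV \<or> card (Vs lam f) = card (UNIV :: 'r set)" using card by auto
  then show ?thesis using card_subset_eq[OF finite_UNIV subset_UNIV, of "Vs lam f"] by auto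
qed

lemma Fq_repr:
  fixes lam :: "'r::{comm_ring_1,finite}"
  assumes pr: "prime p" and p0: "of_nat p = (0::'r)" and prim: "primitive_element lam"
    and card: "card (UNIV :: 'r set) = p ^ f"
  shows "\<exists>a. (\<forall>i<f. a i < p) \<and> x = (\<Sum>i<f. of_nat (a i) * lam ^ i)"
proof -
  have pp: "p > 0" using pr prime_gt_0_nat by blast
  have "x \<in> Vs lam f" using Vs_full[OF assms] by simp
  then obtain c where c: "\<forall>i. c i \<in> \<int>" "x = (\<Sum>i<f. c i * lam ^ i)" by (auto simp: Vs_def)
  define a where "a i = (SOME j. j < p \<and> c i = of_nat j)" for i
  have a: "a i < p \<and> c i = of_nat (a i)" for i
    unfolding a_def by (rule someI_ex) (use Ints_to_nat[OF p0 pp] c in blast)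
  show ?thesis using a c by (intro exI[of _ a]) auto
qed

lemma of_nat_mod_p: "of_nat p = (0::'r::comm_ring_1) \<Longrightarrow> (of_nat (m mod p) :: 'r) = of_nat m"
proof -
  assume p0: "of_nat p = (0::'r)"
  have "(of_nat m :: 'r) = of_nat (p * (m div p) + m mod p)" by simp
  also have "\<dots> = of_nat p * of_nat (m div p) + of_nat (m mod p)" by (simp only: of_nat_add of_nat_mult)
  finally show ?thesis using p0 by simp
qed

lemma Fq_props:
  fixes chi :: "'r::{comm_ring_1,finite} \<Rightarrow> complex"
  assumes "Fq_character chi"
  shows "chi 0 = 1" "\<And>a b. chi (a+b) = chi a * chi b" "chi 1 \<noteq> 1"
    "\<And>x::'r. x \<noteq> 0 \<Longrightarrow> \<exists>y. x * y = 1"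
proof -
  obtain p f lam zeta where H: "prime p \<and> f \<ge> 1 \<and> card (UNIV::'r set) = p ^ f \<and>
        (\<forall>x::'r. x \<noteq> 0 \<longrightarrow> (\<exists>y. x * y = 1)) \<and>
        of_nat p = (0::'r) \<and>
        primitive_element lam \<and>
        zeta ^ p = 1 \<and> (\<forall>j. 0 < j \<and> j < p \<longrightarrow> zeta ^ j \<noteq> 1) \<and>
        (\<forall>a::nat \<Rightarrow> nat. (\<forall>i<f. a i < p) \<longrightarrow>
            chi (\<Sum>i<f. of_nat (a i) * lam ^ i) = zeta ^ (a 0))"
    using assms unfolding Fq_character_def by blast
  have pr: "prime p" and f: "f \<ge> 1" and card: "card (UNIV::'r set) = p ^ f"
    and inv: "\<forall>x::'r. x \<noteq> 0 \<longrightarrow> (\<exists>y. x * y = 1)"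
    and p0: "of_nat p = (0::'r)" and prim: "primitive_element lam"
    and z: "zeta ^ p = 1" and zp: "\<forall>j. 0 < j \<and> j < p \<longrightarrow> zeta ^ j \<noteq> 1"
    and ch: "\<forall>a::nat \<Rightarrow> nat. (\<forall>i<f. a i < p) \<longrightarrow>
            chi (\<Sum>i<f. of_nat (a i) * lam ^ i) = zeta ^ (a 0)"
    using H by auto
  have p2: "p \<ge> 2" using pr prime_ge_2_nat by blast
  show "\<And>x::'r. x \<noteq> 0 \<Longrightarrow> \<exists>y. x * y = 1" using inv by blast
  show "chi 0 = 1" using ch[rule_format, of "\<lambda>_. 0"] p2 by simp
  show "chi (a+b) = chi a * chi b" for a b
  proof -
    obtain u where u: "\<forall>i<f. u i < p" "a = (\<Sum>i<f. of_nat (u i) * lam ^ i)"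
      using Fq_repr[OF pr p0 prim card] by blast
    obtain v where v: "\<forall>i<f. v i < p" "b = (\<Sum>i<f. of_nat (v i) * lam ^ i)"
      using Fq_repr[OF pr p0 prim card] by blast
    have "a + b = (\<Sum>i<f. of_nat ((u i + v i) mod p) * lam ^ i)"
      using u v by (simp add: of_nat_mod_p[OF p0] sum.distrib algebra_simps)
    moreover have "\<forall>i<f. (\<lambda>i. (u i + v i) mod p) i < p" using p2 by simp
    ultimately have "chi (a + b) = zeta ^ ((u 0 + v 0) mod p)" using ch by simp
    also have "\<dots> = zeta ^ u 0 * zeta ^ v 0" using pow_mod_root[OF z] by (simp add: power_add)
    finally show ?thesis using ch u v by simp
  qed
  show "chi 1 \<noteq> 1"
  proof -
    have "(\<Sum>i<f. of_nat (if i = 0 then 1 else 0) * lam ^ i) = (\<Sum>i<f. if i = 0 then 1 else (0::'r))"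
      by (rule sum.cong) auto
    also have "\<dots> = 1" using f by (simp add: sum.delta)
    finally have "chi 1 = zeta ^ 1" using ch[rule_format, of "\<lambda>i. if i = 0 then 1 else 0"] p2 by simp
    then show ?thesis using zp[rule_format, of 1] p2 by simp
  qed
qed

theorem theorem3p3:
  fixes chi :: "'r::{comm_ring_1,finite} \<Rightarrow> complex"
    and C D :: "'r list set" and w :: "'r list" and n :: nat
    and x :: "'r \<times> 'r \<times> 'r \<Rightarrow> complex"
  assumes setting:
    "(Fq_character chi \<and> linear_subspace n C \<and> linear_subspace n D) \<or>
     (Zk_character chi \<and> additive_subgroup n C \<and> additive_subgroup n D)"
    and w: "length w = n"
  shows "jac n C (dual_code n D) w x =
         (1 / of_nat (card D)) *
           jac n C D w (\<lambda>(a1, a2, a3). \<Sum>b\<in>UNIV. chi (a2 * b) * x (a1, b, a3))"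
  using setting
proof
  assume A: "Fq_character chi \<and> linear_subspace n C \<and> linear_subspace n D"
  then have L: "D \<subseteq> vecs n" "replicate n 0 \<in> D" "\<forall>u\<in>D. \<forall>v\<in>D. vadd u v \<in> D"
    "\<forall>c. \<forall>u\<in>D. map ((*) c) u \<in> D" by (auto simp: linear_subspace_def)
  have F: "Fq_character chi" using A by simp
  have neg: "\<forall>u\<in>D. map uminus u \<in> D"
  proof
    fix u assume "u \<in> D"
    then have "map ((*) (-1)) u \<in> D" using L(4) by blast
    moreover have "map ((*) (-1)) u = map uminus u" by simp
    ultimately show "map uminus u \<in> D" by simp
  qed
  show ?thesis
  proof (rule main_abstract[OF Fq_props(1,2)[OF F] L(1-3) neg])
    fix t assume t: "t \<in> vecs n" "t \<notin> dual_code n D"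
    then obtain u where u: "u \<in> D" "dotp n u t \<noteq> 0" by (auto simp: dual_code_def)
    obtain c' where c': "dotp n u t * c' = 1" using Fq_props(4)[OF F u(2)] by blast
    have lu: "length u = n" using u L(1) by (auto simp: vecs_def)
    have "dotp n (map ((*) c') u) t = c' * dotp n u t"
      using lu by (simp add: dotp_def sum_distrib_left mult.assoc)
    then have "dotp n (map ((*) c') u) t = 1" using c' by (simp add: mult.commute)
    moreover have "map ((*) c') u \<in> D" using L(4) u by blast
    ultimately show "\<exists>v0\<in>D. chi (dotp n v0 t) \<noteq> 1" using Fq_props(3)[OF F] by metis
  qed
next
  assume A: "Zk_character chi \<and> additive_subgroup n C \<and> additive_subgroup n D"
  then have L: "D \<subseteq> vecs n" "replicate n 0 \<in> D" "\<forall>u\<in>D. \<forall>v\<in>D. vadd u v \<in> D"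
    "\<forall>u\<in>D. map uminus u \<in> D" by (auto simp: additive_subgroup_def)
  have Z: "Zk_character chi" using A by simp
  show ?thesis
  proof (rule main_abstract[OF Zk_props(1,2)[OF Z] L])
    fix t assume t: "t \<in> vecs n" "t \<notin> dual_code n D"
    then obtain u where u: "u \<in> D" "dotp n u t \<noteq> 0" by (auto simp: dual_code_def)
    then show "\<exists>v0\<in>D. chi (dotp n v0 t) \<noteq> 1" using Zk_props(3)[OF Z] by blast
  qed
qed

end
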